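(* Let $\kappa$ be an infinite cardinal with $2^\kappa=\kappa^+$. Then for every sequence $\bar p=\langle p_\delta:\delta<\kappa^+\rangle$ of partitions $p_\delta:[\kappa^+]^2\to\theta_\delta$ with $\theta_\delta\le\kappa$, $\kappa^+\nrightarrow_{\bar p}[\kappa\circledast\kappa^+/1\circledast\kappa^+]^2_{\kappa^+}$ holds.
   Context: For $f:[\kappa^+]^2\to\lambda$ and $p:[\kappa^+]^2\to\theta$, $X\subseteq[\kappa^+]^2$ is $(f,p)$-strong if for every $\zeta:\theta\to\lambda$ there is $\{\alpha,\beta\}\in X$ with $f(\alpha,\beta)=\zeta(p(\alpha,\beta))$. $\{\alpha\}\circledast B=\{\{\alpha,\beta\}:\alpha<\beta\in B\}$. The symbol $\kappa^+\nrightarrow_{\bar p}[\kappa\circledast\kappa^+/1\circledast\kappa^+]^2_{\lambda}$ means: there is a single $f:[\kappa^+]^2\to\lambda$ such that for every $\delta$, every $A\in[\kappa^+]^\kappa$ and every $B\in[\kappa^+]^{\kappa^+}$ there is $\alpha\in A$ such that $\{\alpha\}\circledast B$ is $(f,p_\delta)$-strong. *)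

theory Defs
  imports Main
begin

text \<open>Strict order induced by a well-order relation r (ordinals below kappa^+
  are represented by the field of the canonical cardinal cardSuc |K|).
  A pair {alpha,beta} of [kappa^+]^2 is represented by the ordered pair
  (alpha,beta) with alpha < beta.\<close>
definition lt_rel :: "'x rel \<Rightarrow> 'x \<Rightarrow> 'x \<Rightarrow> bool" where
  "lt_rel r a b \<longleftrightarrow> (a, b) \<in> r \<and> a \<noteq> b"

definition circledast :: "'x rel \<Rightarrow> 'x \<Rightarrow> 'x set \<Rightarrow> ('x \<times> 'x) set" where
  "circledast r a B = {(a, b) | b. b \<in> B \<and> lt_rel r a b}"

definition strong :: "('x \<Rightarrow> 'x \<Rightarrow> 'l) \<Rightarrow> ('x \<Rightarrow> 'x \<Rightarrow> 'c) \<Rightarrow> 'c set \<Rightarrow> 'l set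
    \<Rightarrow> ('x \<times> 'x) set \<Rightarrow> bool" where
  "strong f p Theta Lambda X \<longleftrightarrow>
     (\<forall>zeta. (\<forall>c\<in>Theta. zeta c \<in> Lambda) \<longrightarrow>
        (\<exists>(a, b)\<in>X. f a b = zeta (p a b)))"

text \<open>kappa^+ -/->_pbar [kappa circledast kappa^+ / 1 circledast kappa^+]^2_Lambda,
  where kappa^+ is given by the well-order r (field = kappa^+), kappa = |K|,
  the colour set is Lambda and p delta has colours in Theta delta.\<close>
definition neg_rel :: "'x rel \<Rightarrow> 'k set \<Rightarrow> 'l set \<Rightarrow> ('x \<Rightarrow> 'x \<Rightarrow> 'x \<Rightarrow> 'c)
    \<Rightarrow> ('x \<Rightarrow> 'c set) \<Rightarrow> bool" where
  "neg_rel r K Lambda p Theta \<longleftrightarrow>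
     (\<exists>f :: 'x \<Rightarrow> 'x \<Rightarrow> 'l.
        (\<forall>a\<in>Field r. \<forall>b\<in>Field r. lt_rel r a b \<longrightarrow> f a b \<in> Lambda) \<and>
        (\<forall>delta\<in>Field r. \<forall>A B.
            A \<subseteq> Field r \<and> (card_of A, card_of K) \<in> ordIso \<and>
            B \<subseteq> Field r \<and> (card_of B, card_of (Field r)) \<in> ordIso \<longrightarrow>
            (\<exists>a\<in>A. strong f (p delta) (Theta delta) Lambda (circledast r a B))))"

end

theory Submission
  imports Defs
begin

unbundle cardinal_syntax



lemma wo_trans: "Well_order r \<Longrightarrow> (a,b)\<in>r \<Longrightarrow> (b,c)\<in>r \<Longrightarrow> (a,c)\<in>r"
  unfolding order_on_defs trans_def by blast
lemma wo_antisym: "Well_order r \<Longrightarrow> (a,b)\<in>r \<Longrightarrow> (b,a)\<in>r \<Longrightarrow> a = b"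
  unfolding order_on_defs antisym_def by blast
lemma wo_total: "Well_order r \<Longrightarrow> a\<in>Field r \<Longrightarrow> b\<in>Field r \<Longrightarrow> a \<noteq> b \<Longrightarrow> (a,b)\<in>r \<or> (b,a)\<in>r"
  unfolding order_on_defs total_on_def by blast

lemma lt_trans: "Well_order r \<Longrightarrow> lt_rel r a b \<Longrightarrow> lt_rel r b c \<Longrightarrow> lt_rel r a c"
  unfolding lt_rel_def by (metis wo_trans wo_antisym)
lemma lt_le_trans: "Well_order r \<Longrightarrow> (a,b)\<in>r \<Longrightarrow> lt_rel r b c \<Longrightarrow> lt_rel r a c"
  unfolding lt_rel_def by (metis wo_trans wo_antisym)
lemma lt_Field: "lt_rel r a b \<Longrightarrow> a \<in> Field r \<and> b \<in> Field r"
  unfolding lt_rel_def by (auto intro: FieldI1 FieldI2)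
lemma underS_lt: "a \<in> underS r b \<longleftrightarrow> lt_rel r a b"
  unfolding underS_def lt_rel_def by auto

lemma sdr:
  assumes inf: "infinite K" and I: "|I| \<le>o |K|" and S: "\<forall>i\<in>I. |K| \<le>o |S i|"
  shows "\<exists>g. inj_on g I \<and> (\<forall>i\<in>I. g i \<in> S i)"
proof -
  obtain \<iota> where \<iota>: "inj_on \<iota> I" "\<iota> ` I \<subseteq> K" using card_of_ordLeq[of I K] I by auto
  let ?w = "|K|"
  have W: "Well_order ?w" by (rule card_of_Well_order)
  have FW: "Field ?w = K" by (rule Field_card_of)
  let ?R = "?w - Id"
  have wf: "wf ?R" using W unfolding well_order_on_def by blast
  define T where "T k = S (inv_into I \<iota> k)" for k
  have TK: "|K| \<le>o |T k|" if "k \<in> \<iota> ` I" for k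
    using S \<iota> that unfolding T_def by (auto simp: inv_into_into)
  define H where "H = (\<lambda>h k. SOME a. a \<in> T k \<and> a \<notin> h ` underS ?w k)"
  define h where "h = wfrec ?R H"
  have step: "h k \<in> T k \<and> h k \<notin> h ` underS ?w k" if kI: "k \<in> \<iota> ` I" for k
  proof -
    have k: "k \<in> K" using kI \<iota> by blast
    have eq: "cut h ?R k ` underS ?w k = h ` underS ?w k"
      by (intro image_cong refl cut_apply) (auto simp: underS_def)
    have hk: "h k = H (cut h ?R k) k" unfolding h_def by (rule wfrec[OF wf])
    have "|underS ?w k| <o ?w" using card_of_underS[OF card_of_Card_order, of k K] k by (simp add: FW)
    hence sm: "|h ` underS ?w k| <o |K|" by (rule ordLeq_ordLess_trans[OF card_of_image])
    have "\<exists>a. a \<in> T k \<and> a \<notin> h ` underS ?w k"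
    proof (rule ccontr)
      assume "\<not> ?thesis"
      hence "T k \<subseteq> h ` underS ?w k" by blast
      hence "|T k| \<le>o |h ` underS ?w k|" by (rule card_of_mono1)
      hence "|K| <o |K|" by (rule ordLeq_ordLess_trans[OF ordLeq_transitive[OF TK[OF kI]] sm])
      thus False using ordLess_irreflexive by blast
    qed
    thus ?thesis unfolding hk H_def eq by (rule someI_ex)
  qed
  show ?thesis
  proof (intro exI conjI ballI)
    show "inj_on (h \<circ> \<iota>) I"
    proof (rule inj_onI)
      fix i j assume ij: "i \<in> I" "j \<in> I" "(h \<circ> \<iota>) i = (h \<circ> \<iota>) j"
      show "i = j"
      proof (rule ccontr)
        assume "i \<noteq> j"
        hence ne: "\<iota> i \<noteq> \<iota> j" using \<iota>(1) ij by (simp add: inj_on_eq_iff)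
        have K: "\<iota> i \<in> K" "\<iota> j \<in> K" using \<iota> ij by auto
        from wo_total[OF W, of "\<iota> i" "\<iota> j"] ne K FW
        have "\<iota> i \<in> underS ?w (\<iota> j) \<or> \<iota> j \<in> underS ?w (\<iota> i)"
          unfolding underS_def by auto
        moreover have si: "h (\<iota> i) \<notin> h ` underS ?w (\<iota> i)" and sj: "h (\<iota> j) \<notin> h ` underS ?w (\<iota> j)"
          using step[of "\<iota> i"] step[of "\<iota> j"] ij by auto
        moreover have "h (\<iota> i) = h (\<iota> j)" using ij by simp
        ultimately show False by (metis imageI)
      qed
    qed
  next
    fix i assume i: "i \<in> I"
    have "h (\<iota> i) \<in> T (\<iota> i)" using step \<iota> i by blast
    thus "(h \<circ> \<iota>) i \<in> S i" using i \<iota>(1) unfolding T_def by auto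
  qed
qed




lemma cs_wo: "Well_order (cardSuc |K| )"
  by (rule cardSuc_Well_order[OF card_of_Card_order])

lemma cs_underS:
  assumes "b \<in> Field (cardSuc |K| )"
  shows "|underS (cardSuc |K| ) b| \<le>o |K|"
proof -
  have "|underS (cardSuc |K| ) b| <o cardSuc |K|"
    by (rule card_of_underS[OF cardSuc_Card_order[OF card_of_Card_order] assms])
  thus ?thesis using cardSuc_ordLeq_ordLess[OF card_of_Card_order card_of_Card_order] by blast
qed

lemma cs_Field_big: "|K| <o |Field (cardSuc |K| )|"
proof -
  have "|Field (cardSuc |K| )| =o cardSuc |K|"
    by (rule card_of_Field_ordIso[OF cardSuc_Card_order[OF card_of_Card_order]])
  moreover have "|K| <o cardSuc |K|" by (rule cardSuc_greater[OF card_of_Card_order])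
  ultimately show ?thesis using ordLess_ordIso_trans ordIso_symmetric by blast
qed

lemma cs_unbounded:
  assumes inf: "infinite K" and B: "B \<subseteq> Field (cardSuc |K| )"
    and cB: "|B| =o |Field (cardSuc |K| )|" and a: "a \<in> Field (cardSuc |K| )"
  shows "\<exists>b\<in>B. lt_rel (cardSuc |K| ) a b"
proof (rule ccontr)
  let ?r = "cardSuc |K|"
  assume "\<not> ?thesis"
  hence "B \<subseteq> underS ?r a \<union> {a}"
    using wo_total[OF cs_wo, of a] B a unfolding underS_def lt_rel_def by blast
  hence 1: "|B| \<le>o |underS ?r a \<union> {a}|" by (rule card_of_mono1)
  have 2: "|underS ?r a \<union> {a}| \<le>o |K|"
    apply (rule card_of_Un_ordLeq_infinite_Field[where r="|K|", simplified Field_card_of])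
    using inf cs_underS[OF a] card_of_singl_ordLeq[of K a] card_of_card_order_on[of K] by auto
  have "|Field ?r| \<le>o |K|"
    using ordIso_ordLeq_trans[OF ordIso_symmetric[OF cB] ordLeq_transitive[OF 1 2]] .
  thus False using cs_Field_big not_ordLess_ordLeq by blast
qed

lemma cs_bounded:
  assumes inf: "infinite K" and X: "X \<subseteq> Field (cardSuc |K| )" and cX: "|X| \<le>o |K|"
  shows "\<exists>b\<in>Field (cardSuc |K| ). X \<subseteq> underS (cardSuc |K| ) b"
proof -
  let ?r = "cardSuc |K|"
  have ch: "relChain ?r (underS ?r)"
    unfolding relChain_def
  proof (intro allI impI subsetI)
    fix i j x assume ij: "(i, j) \<in> ?r" and x: "x \<in> underS ?r i"
    hence "lt_rel ?r x i" by (simp add: underS_lt)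
    hence "lt_rel ?r x j" using ij cs_wo wo_trans wo_antisym unfolding lt_rel_def by metis
    thus "x \<in> underS ?r j" by (simp add: underS_lt)
  qed
  have "X \<subseteq> (\<Union>i\<in>Field ?r. underS ?r i)"
  proof
    fix x assume x: "x \<in> X"
    hence "x \<in> Field ?r" using X by blast
    then obtain b where "b \<in> Field ?r" "lt_rel ?r x b"
      using cs_unbounded[OF inf order_refl ordIso_refl[OF card_of_Card_order]] by blast
    hence "x \<in> underS ?r b" by (simp add: underS_lt)
    thus "x \<in> (\<Union>i\<in>Field ?r. underS ?r i)" using \<open>b \<in> Field ?r\<close> by (rule UN_I[rotated])
  qed
  moreover have "\<not> finite (Field |K| )" using inf by (simp add: Field_card_of)
  ultimately show ?thesis using cardSuc_UNION[OF card_of_Card_order, of K "underS ?r" X] cX ch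
    by blast
qed




lemma func_F:
  assumes inf: "infinite K" and FP: "|F| =o |Pow K|"
  shows "|Func K F| \<le>o |F|"
proof -
  have FF: "|F| =o |Func K (UNIV::bool set)|"
    using ordIso_transitive[OF FP card_of_Pow_Func] .
  then obtain \<phi> where \<phi>: "bij_betw \<phi> (Func K (UNIV::bool set)) F"
    using card_of_ordIso ordIso_symmetric by blast
  have "Func K F = Func_map K \<phi> id ` Func K (Func K (UNIV::bool set))"
    by (rule Func_map_surj) (use \<phi> in \<open>auto simp: bij_betw_def\<close>)
  hence 1: "|Func K F| \<le>o |Func K (Func K (UNIV::bool set))|"
    by (metis card_of_image)
  have 2: "|Func K (Func K (UNIV::bool set))| =o |Func (K \<times> K) (UNIV::bool set)|"
    by (rule ordIso_symmetric[OF card_of_Func_Times])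
  obtain f2 where f2: "inj_on f2 (K \<times> K)" "f2 ` (K \<times> K) \<subseteq> K"
    using card_of_ordLeq[of "K \<times> K" K] card_of_Times_same_infinite[OF inf] ordIso_iff_ordLeq
    by blast
  have "K \<noteq> {}" using inf by auto
  hence "Func (K \<times> K) (UNIV::bool set) = Func_map (K \<times> K) id f2 ` Func K (UNIV::bool set)"
    by (intro Func_map_surj) (use f2 in auto)
  hence 3: "|Func (K \<times> K) (UNIV::bool set)| \<le>o |Func K (UNIV::bool set)|"
    by (metis card_of_image)
  show ?thesis
    using ordLeq_transitive[OF 1 ordLeq_transitive[OF ordIso_imp_ordLeq[OF 2] ordLeq_ordIso_trans[OF 3 ordIso_symmetric[OF FF]]]] .
qed

lemma func_func_F:
  assumes inf: "infinite K" and FP: "|F| =o |Pow K|" and Fne: "F \<noteq> {}"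
  shows "|Func K (Func K F)| \<le>o |F|"
proof -
  have 1: "|Func K F| \<le>o |F|" by (rule func_F[OF inf FP])
  have "Func K F \<noteq> {}" using Fne by (simp add: Func_is_emp)
  then obtain f1 where f1: "f1 ` F = Func K F" using card_of_ordLeq2[of "Func K F" F] 1 by auto
  have "Func K (Func K F) = Func_map K f1 id ` Func K F"
    by (rule Func_map_surj) (use f1 in auto)
  hence "|Func K (Func K F)| \<le>o |Func K F|" by (metis card_of_image)
  thus ?thesis using 1 by (rule ordLeq_transitive)
qed




lemma enum:
  fixes K :: "'k set" and Theta :: "'k set \<Rightarrow> 'c set"
  assumes inf: "infinite K" and pow: "|Pow K| =o cardSuc |K|"
    and th: "\<forall>d\<in>Field (cardSuc |K| ). |Theta d| \<le>o |K|"
  shows "\<exists>(D::'k set \<Rightarrow> 'k set) (AA::'k set \<Rightarrow> 'k set set) (ZZ::'k set \<Rightarrow> 'k set \<Rightarrow> 'c \<Rightarrow> 'k set).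
     (\<forall>g\<in>Field (cardSuc |K| ). D g \<in> Field (cardSuc |K| ) \<and> AA g \<subseteq> Field (cardSuc |K| ) \<and>
        (\<forall>a\<in>AA g. \<forall>c\<in>Theta (D g). ZZ g a c \<in> Field (cardSuc |K| ))) \<and>
     (\<forall>d\<in>Field (cardSuc |K| ). \<forall>A Z. A \<subseteq> Field (cardSuc |K| ) \<and> |A| =o |K| \<and>
        (\<forall>a\<in>A. \<forall>c\<in>Theta d. Z a c \<in> Field (cardSuc |K| )) \<longrightarrow>
        (\<exists>g\<in>Field (cardSuc |K| ). D g = d \<and> AA g = A \<and> (\<forall>a\<in>A. \<forall>c\<in>Theta d. ZZ g a c = Z a c)))"
proof -
  define F where "F = Field (cardSuc |K| )"
  have FP: "|F| =o |Pow K|"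
    unfolding F_def using ordIso_transitive[OF card_of_Field_ordIso[OF cardSuc_Card_order[OF card_of_Card_order]] ordIso_symmetric[OF pow]] .
  have Fne: "F \<noteq> {}" unfolding F_def by (rule Field_cardSuc_not_empty[OF card_of_Card_order])
  have Finf: "infinite F"
  proof
    assume "finite F"
    moreover have "|K| \<le>o |F|" unfolding F_def using cs_Field_big ordLess_imp_ordLeq by blast
    ultimately show False using inf card_of_ordLeq_finite by blast
  qed
  have "\<forall>d\<in>F. \<exists>t. inj_on t (Theta d) \<and> t ` Theta d \<subseteq> K"
    using th card_of_ordLeq unfolding F_def by blast
  then obtain \<theta> where \<theta>: "\<And>d. d \<in> F \<Longrightarrow> inj_on (\<theta> d) (Theta d) \<and> \<theta> d ` Theta d \<subseteq> K"
    by metis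
  define C where "C = F \<times> (Func K F \<times> Func K (Func K F))"
  have F1: "|Func K F| \<le>o |F|" by (rule func_F[OF inf FP])
  have F2: "|Func K (Func K F)| \<le>o |F|" by (rule func_func_F[OF inf FP Fne])
  have cF: "Card_order |F|" "\<not> finite (Field |F| )" using Finf by (auto simp: Field_card_of card_of_card_order_on)
  have "|Func K F \<times> Func K (Func K F)| \<le>o |F|"
    by (rule card_of_Times_ordLeq_infinite_Field[OF cF(2) F1 F2 cF(1)])
  hence "|C| \<le>o |F|" unfolding C_def
    by (rule card_of_Times_ordLeq_infinite_Field[OF cF(2) ordLeq_refl[OF card_of_Card_order] _ cF(1)])
  moreover have "C \<noteq> {}" unfolding C_def using Fne by (simp add: Func_is_emp)
  ultimately obtain s where s: "s ` F = C" using card_of_ordLeq2[of C F] by auto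
  define D where "D g = fst (s g)" for g
  define AA where "AA g = fst (snd (s g)) ` K" for g
  define ZZ where "ZZ g a c = snd (snd (s g)) (inv_into K (fst (snd (s g))) a) (\<theta> (D g) c)" for g a c
  show ?thesis unfolding F_def[symmetric]
  proof (intro exI[of _ D] exI[of _ AA] exI[of _ ZZ] conjI ballI allI impI)
    fix g assume g: "g \<in> F"
    then obtain d a h where sg: "s g = (d, a, h)" and d: "d \<in> F" and a: "a \<in> Func K F"
      and h: "h \<in> Func K (Func K F)" using s unfolding C_def by (metis SigmaE imageI)
    show "D g \<in> F" using sg d by (simp add: D_def)
    show "AA g \<subseteq> F" using sg a by (auto simp: AA_def Func_def)
    fix x c assume x: "x \<in> AA g" and c: "c \<in> Theta (D g)"
    have k: "inv_into K a x \<in> K" using x sg by (simp add: AA_def inv_into_into)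
    have t: "\<theta> d c \<in> K" using \<theta>[OF d] c sg by (auto simp: D_def)
    have "h (inv_into K a x) \<in> Func K F" using h k by (auto simp: Func_def)
    thus "ZZ g x c \<in> F" using t sg by (simp add: ZZ_def D_def Func_def)
  next
    fix d A Z assume d: "d \<in> F" and AZ: "A \<subseteq> F \<and> |A| =o |K| \<and> (\<forall>a\<in>A. \<forall>c\<in>Theta d. Z a c \<in> F)"
    then obtain b where b: "bij_betw b K A" using card_of_ordIso ordIso_symmetric by blast
    define a where "a k = (if k \<in> K then b k else undefined)" for k
    define h where "h k = (if k \<in> K then (\<lambda>j. if j \<in> K then (if j \<in> \<theta> d ` Theta d then Z (a k) (inv_into (Theta d) (\<theta> d) j) else d) else undefined) else undefined)" for k
    have aK: "a ` K = A" using b by (auto simp: a_def bij_betw_def)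
    have a: "a \<in> Func K F" using b AZ by (auto simp: a_def Func_def bij_betw_def)
    have h: "h \<in> Func K (Func K F)"
    proof -
      have "Z (a k) (inv_into (Theta d) (\<theta> d) j) \<in> F" if "k \<in> K" "j \<in> \<theta> d ` Theta d" for k j
        using AZ aK that inv_into_into[OF that(2)] by blast
      thus ?thesis using d by (auto simp: h_def Func_def)
    qed
    have "(d, a, h) \<in> C" using d a h by (simp add: C_def)
    then obtain g where g: "g \<in> F" "s g = (d, a, h)" using s by (metis imageE)
    show "\<exists>g\<in>F. D g = d \<and> AA g = A \<and> (\<forall>x\<in>A. \<forall>c\<in>Theta d. ZZ g x c = Z x c)"
    proof (intro bexI[OF _ g(1)] conjI ballI)
      show "D g = d" using g by (simp add: D_def)
      show "AA g = A" using g aK by (simp add: AA_def)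
      fix x c assume x: "x \<in> A" and c: "c \<in> Theta d"
      have k: "inv_into K a x \<in> K" and ak: "a (inv_into K a x) = x"
        using x aK by (auto simp: inv_into_into f_inv_into_f)
      have t: "\<theta> d c \<in> K" "\<theta> d c \<in> \<theta> d ` Theta d" using \<theta>[OF d] c by auto
      have "inv_into (Theta d) (\<theta> d) (\<theta> d c) = c" using \<theta>[OF d] c by (simp add: inv_into_f_f)
      thus "ZZ g x c = Z x c" using g k ak t by (simp add: ZZ_def D_def h_def)
    qed
  qed
qed




lemma not_strong:
  "\<not> strong f q T L (circledast r a B) \<Longrightarrow>
     \<exists>z. (\<forall>c\<in>T. z c \<in> L) \<and> (\<forall>y\<in>B. lt_rel r a y \<longrightarrow> f a y \<noteq> z (q a y))"
  unfolding strong_def circledast_def by auto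

theorem theorem4p11:
  fixes K :: "'k set"
    and p :: "'k set \<Rightarrow> 'k set \<Rightarrow> 'k set \<Rightarrow> 'c"
    and Theta :: "'k set \<Rightarrow> 'c set"
  assumes "infinite K"
    and "(card_of (Pow K), cardSuc (card_of K)) \<in> ordIso"
    and "\<forall>delta\<in>Field (cardSuc (card_of K)). (card_of (Theta delta), card_of K) \<in> ordLeq"
    and "\<forall>delta\<in>Field (cardSuc (card_of K)). \<forall>a\<in>Field (cardSuc (card_of K)).
           \<forall>b\<in>Field (cardSuc (card_of K)).
           lt_rel (cardSuc (card_of K)) a b \<longrightarrow> p delta a b \<in> Theta delta"
  shows "neg_rel (cardSuc (card_of K)) K (Field (cardSuc (card_of K))) p Theta"
proof -
  note inf = assms(1)
  define r where "r = cardSuc |K|"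
  define F where "F = Field r"
  have W: "Well_order r" unfolding r_def by (rule cs_wo)
  have pF: "\<And>d a b. d \<in> F \<Longrightarrow> a \<in> F \<Longrightarrow> b \<in> F \<Longrightarrow> lt_rel r a b \<Longrightarrow> p d a b \<in> Theta d"
    using assms(4) unfolding r_def F_def by blast
  have E: "\<exists>(D::'k set \<Rightarrow> 'k set) (AA::'k set \<Rightarrow> 'k set set) (ZZ::'k set \<Rightarrow> 'k set \<Rightarrow> 'c \<Rightarrow> 'k set).
     (\<forall>g\<in>F. D g \<in> F \<and> AA g \<subseteq> F \<and> (\<forall>a\<in>AA g. \<forall>c\<in>Theta (D g). ZZ g a c \<in> F)) \<and>
     (\<forall>d\<in>F. \<forall>A Z. A \<subseteq> F \<and> |A| =o |K| \<and> (\<forall>a\<in>A. \<forall>c\<in>Theta d. Z a c \<in> F) \<longrightarrow>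
        (\<exists>g\<in>F. D g = d \<and> AA g = A \<and> (\<forall>a\<in>A. \<forall>c\<in>Theta d. ZZ g a c = Z a c)))"
    unfolding F_def r_def by (rule enum[OF inf assms(2) assms(3)])
  then obtain D AA ZZ where
    P1: "\<forall>g\<in>F. D g \<in> F \<and> AA g \<subseteq> F \<and> (\<forall>a\<in>AA g. \<forall>c\<in>Theta (D g). ZZ g a c \<in> F)" and
    P2: "\<forall>d\<in>F. \<forall>A Z. A \<subseteq> F \<and> |A| =o |K| \<and> (\<forall>a\<in>A. \<forall>c\<in>Theta d. Z a c \<in> F) \<longrightarrow>
        (\<exists>g\<in>F. D g = d \<and> AA g = A \<and> (\<forall>a\<in>A. \<forall>c\<in>Theta d. ZZ g a c = Z a c))"
    by (elim exE conjE) iprover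
  define I where "I b = {g \<in> F. lt_rel r g b \<and> AA g \<subseteq> underS r b \<and> |AA g| =o |K|}" for b
  have "\<forall>b\<in>F. \<exists>G. inj_on G (I b) \<and> (\<forall>g\<in>I b. G g \<in> AA g)"
  proof
    fix b assume b: "b \<in> F"
    have "I b \<subseteq> underS r b" unfolding I_def by (auto simp: underS_lt)
    hence "|I b| \<le>o |underS r b|" by (rule card_of_mono1)
    moreover have "|underS r b| \<le>o |K|" using cs_underS b unfolding r_def F_def by blast
    ultimately have 1: "|I b| \<le>o |K|" by (rule ordLeq_transitive)
    have 2: "\<forall>g\<in>I b. |K| \<le>o |AA g|" unfolding I_def
      using ordIso_symmetric ordIso_imp_ordLeq by blast
    show "\<exists>G. inj_on G (I b) \<and> (\<forall>g\<in>I b. G g \<in> AA g)" by (rule sdr[OF inf 1 2])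
  qed
  then obtain G where G: "\<And>b. b \<in> F \<Longrightarrow> inj_on (G b) (I b) \<and> (\<forall>g\<in>I b. G b g \<in> AA g)"
    by metis
  have Fne: "F \<noteq> {}" unfolding F_def r_def by (rule Field_cardSuc_not_empty[OF card_of_Card_order])
  define z0 where "z0 = (SOME x. x \<in> F)"
  have z0: "z0 \<in> F" unfolding z0_def using Fne by (simp add: some_in_eq)
  define sel where "sel a b = (SOME g. g \<in> I b \<and> G b g = a)" for a b
  define f where "f a b = (if \<exists>g\<in>I b. G b g = a then ZZ (sel a b) a (p (D (sel a b)) a b) else z0)" for a b
  have sel: "sel a b \<in> I b \<and> G b (sel a b) = a" if "\<exists>g\<in>I b. G b g = a" for a b
    unfolding sel_def using that by (metis (mono_tags, lifting) someI_ex)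
  show ?thesis unfolding neg_rel_def r_def[symmetric] F_def[symmetric]
  proof (intro exI[of _ f] conjI ballI allI impI)
    fix a b assume a: "a \<in> F" and b: "b \<in> F" and ab: "lt_rel r a b"
    show "f a b \<in> F"
    proof (cases "\<exists>g\<in>I b. G b g = a")
      case True
      let ?g = "sel a b"
      have g: "?g \<in> I b" "G b ?g = a" using sel[OF True] by auto
      have gF: "?g \<in> F" using g unfolding I_def by blast
      have aA: "a \<in> AA ?g" using G[OF b] g by metis
      have "p (D ?g) a b \<in> Theta (D ?g)" using pF P1 gF a b ab by blast
      hence "ZZ ?g a (p (D ?g) a b) \<in> F" using P1 gF aA by blast
      thus ?thesis using True by (simp add: f_def)
    next
      case False thus ?thesis using z0 by (simp add: f_def)
    qed
  next
    fix d A B assume d: "d \<in> F" and AB: "A \<subseteq> F \<and> |A| =o |K| \<and> B \<subseteq> F \<and> |B| =o |F|"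
    show "\<exists>a\<in>A. strong f (p d) (Theta d) F (circledast r a B)"
    proof (rule ccontr)
      assume "\<not> ?thesis"
      hence "\<forall>a\<in>A. \<exists>z. (\<forall>c\<in>Theta d. z c \<in> F) \<and> (\<forall>y\<in>B. lt_rel r a y \<longrightarrow> f a y \<noteq> z (p d a y))"
        by (auto intro: not_strong)
      hence "\<exists>Z. \<forall>a\<in>A. (\<forall>c\<in>Theta d. Z a c \<in> F) \<and> (\<forall>y\<in>B. lt_rel r a y \<longrightarrow> f a y \<noteq> Z a (p d a y))"
        by (rule bchoice)
      then obtain Z where Z0: "\<forall>a\<in>A. (\<forall>c\<in>Theta d. Z a c \<in> F) \<and> (\<forall>y\<in>B. lt_rel r a y \<longrightarrow> f a y \<noteq> Z a (p d a y))"
        by (elim exE)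
      have Z: "\<And>a. a \<in> A \<Longrightarrow> (\<forall>c\<in>Theta d. Z a c \<in> F) \<and> (\<forall>y\<in>B. lt_rel r a y \<longrightarrow> f a y \<noteq> Z a (p d a y))"
        using Z0 by (rule bspec)
      have "\<exists>g\<in>F. D g = d \<and> AA g = A \<and> (\<forall>a\<in>A. \<forall>c\<in>Theta d. ZZ g a c = Z a c)"
        by (rule P2[rule_format, OF d]) (use AB Z in auto)
      then obtain g where gF: "g \<in> F" and gD: "D g = d" and gA: "AA g = A"
        and gZ: "\<forall>a\<in>A. \<forall>c\<in>Theta d. ZZ g a c = Z a c"
        by blast
      have "\<exists>b\<in>Field (cardSuc |K| ). A \<subseteq> underS (cardSuc |K| ) b"
        by (rule cs_bounded[OF inf]) (use AB in \<open>auto simp: r_def F_def intro: ordIso_imp_ordLeq\<close>)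
      then obtain b0 where b0: "b0 \<in> F" "A \<subseteq> underS r b0"
        unfolding r_def F_def by blast
      define m where "m = (if (g, b0) \<in> r then b0 else g)"
      have mF: "m \<in> F" using gF b0 by (simp add: m_def)
      have refl: "(x, x) \<in> r" if "x \<in> F" for x
        using W that unfolding F_def order_on_defs refl_on_def by blast
      have gm: "(g, m) \<in> r" and bm: "(b0, m) \<in> r"
        using wo_total[OF W, of g b0] gF b0 refl unfolding F_def m_def by auto
      have "\<exists>b\<in>B. lt_rel (cardSuc |K| ) m b"
        by (rule cs_unbounded[OF inf]) (use AB mF in \<open>simp_all add: r_def F_def\<close>)
      then obtain b where bB: "b \<in> B" and mb: "lt_rel r m b"
        unfolding r_def by blast
      have bF: "b \<in> F" using bB AB by blast
      have gb: "lt_rel r g b" by (rule lt_le_trans[OF W gm mb])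
      have b0b: "lt_rel r b0 b" by (rule lt_le_trans[OF W bm mb])
      have Ab: "A \<subseteq> underS r b"
        using b0(2) lt_trans[OF W _ b0b] by (auto simp: underS_lt)
      have gI: "g \<in> I b" unfolding I_def using gF gb Ab gA AB by simp
      let ?x = "G b g"
      have xA: "?x \<in> A" using G[OF bF] gI gA by metis
      have ex: "\<exists>g\<in>I b. G b g = ?x" using gI by blast
      have "sel ?x b = g"
        using sel[OF ex] G[OF bF] gI unfolding inj_on_def by metis
      hence fx: "f ?x b = ZZ g ?x (p d ?x b)" using ex gD by (simp add: f_def)
      have xb: "lt_rel r ?x b" using xA Ab by (auto simp: underS_lt)
      have "p d ?x b \<in> Theta d" using pF d xA AB bF xb by blast
      hence "f ?x b = Z ?x (p d ?x b)" using fx gZ xA by simp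
      thus False using Z[OF xA] bB xb by blast
    qed
  qed
qed


end
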